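(* Let $\alpha\in(0,1)$, $\delta>0$, $\beta_0\in(0,-\log(\alpha)/\delta)$, and let $f:\mathbb R_+\to\bar{\mathbb R}$ be non-increasing. Then \[ \max_{\beta\in\mathcal B(\beta_0,\delta)}\big(f(\beta)+\beta^{-1}\log\alpha\big)\le\sup_{\beta>0}\big(f(\beta)+\beta^{-1}\log\alpha\big)\le\max_{\beta\in\mathcal B(\beta_0,\delta)}\big(f(\beta)+\beta^{-1}\log\alpha\big)+\max\{f(0)-f(\beta_0),\,\delta\}. \]
   Context: The finite set $\mathcal B(\beta_0,\delta)=\{\beta_0,\beta_1,\dots,\beta_K\}$ with $0<\beta_0<\beta_1<\dots<\beta_K$ is given by $\beta_{k+1}=\frac{\beta_k\log\alpha}{\beta_k\delta+\log\alpha}$ for the intermediate indices (equivalently $\beta_{k+1}^{-1}=\beta_k^{-1}+\delta/\log\alpha$), continued while the values stay below $-\log(\alpha)/\delta$, and $\beta_K=-\log(\alpha)/\delta$. $\bar{\mathbb R}$ denotes the extended reals. *)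

theory Defs
  imports "HOL-Analysis.Analysis" "HOL-Library.Extended_Real"
begin

(* Intermediate grid points: beta_seq a d b0 0 = b0,
   1 / beta_seq (k+1) = 1 / beta_seq k + d / ln a *)
definition beta_seq :: "real \<Rightarrow> real \<Rightarrow> real \<Rightarrow> nat \<Rightarrow> real" where
  "beta_seq a d b0 k = 1 / (1 / b0 + real k * d / ln a)"

definition beta_grid :: "real \<Rightarrow> real \<Rightarrow> real \<Rightarrow> real set" where
  "beta_grid a d b0 =
     {beta_seq a d b0 k | k. \<forall>j\<le>k. 0 < beta_seq a d b0 j \<and> beta_seq a d b0 j < - ln a / d}
     \<union> {- ln a / d}"

end

theory Submission
  imports Defs
begin

lemma grid_memI: "x = h k \<Longrightarrow> P k \<Longrightarrow> x \<in> {h k | k. P k} \<union> B"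
  by blast

theorem lemma15:
  fixes a d b0 :: real and f :: "real \<Rightarrow> ereal"
  assumes "0 < a" "a < 1" "0 < d" "0 < b0" "b0 < - ln a / d"
    and "\<And>x y. 0 \<le> x \<Longrightarrow> x \<le> y \<Longrightarrow> f y \<le> f x"
  shows "Max ((\<lambda>b. f b + ereal (ln a / b)) ` beta_grid a d b0)
           \<le> (SUP b\<in>{0<..}. f b + ereal (ln a / b))
         \<and> (SUP b\<in>{0<..}. f b + ereal (ln a / b))
           \<le> Max ((\<lambda>b. f b + ereal (ln a / b)) ` beta_grid a d b0)
              + max (f 0 - f b0) (ereal d)"
proof -
  define L where "L = - ln a"
  have L: "0 < L" using assms(1,2) unfolding L_def by simp
  have lna: "ln a = - L" unfolding L_def by simp
  define c where "c = L / d"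
  have c: "0 < c" "b0 < c" using assms(3,5) L unfolding c_def L_def by (auto simp: divide_neg_pos)
  define s where "s k = 1 / b0 - real k * d / L" for k :: nat
  have bs: "beta_seq a d b0 k = 1 / s k" for k
    unfolding beta_seq_def s_def lna by simp
  define G where "G = beta_grid a d b0"
  define g where "g = (\<lambda>b. f b + ereal (ln a / b))"
  have Gdef: "G = {beta_seq a d b0 k | k. \<forall>j\<le>k. 0 < beta_seq a d b0 j \<and> beta_seq a d b0 j < c} \<union> {c}"
    unfolding G_def beta_grid_def c_def L_def by simp
  have mem_iff: "0 < beta_seq a d b0 j \<and> beta_seq a d b0 j < c \<longleftrightarrow> s j > d / L" for j
  proof -
    have "0 < beta_seq a d b0 j \<and> beta_seq a d b0 j < c \<longleftrightarrow> 0 < s j \<and> 1 / s j < L / d"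
      unfolding bs c_def by simp
    also have "\<dots> \<longleftrightarrow> s j > d / L"
    proof
      assume h: "0 < s j \<and> 1 / s j < L / d"
      then have h1: "0 < s j" and h2: "1 / s j < L / d" by auto
      have "d < L * s j" using h1 h2 L assms(3) by (simp add: field_simps)
      then show "s j > d / L" using L assms(3) by (simp add: field_simps)
    next
      assume h: "s j > d / L"
      have "0 < d / L" using L assms(3) by simp
      then have sp: "0 < s j" using h by linarith
      have "d < L * s j" using h L assms(3) by (simp add: field_simps)
      then show "0 < s j \<and> 1 / s j < L / d" using sp L assms(3) by (simp add: field_simps)
    qed
    finally show ?thesis .
  qed
  have fin: "finite G"
  proof -
    have "{beta_seq a d b0 k | k. \<forall>j\<le>k. 0 < beta_seq a d b0 j \<and> beta_seq a d b0 j < c}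
          \<subseteq> beta_seq a d b0 ` {..nat \<lceil>L / (b0 * d)\<rceil>}"
    proof
      fix x assume "x \<in> {beta_seq a d b0 k | k. \<forall>j\<le>k. 0 < beta_seq a d b0 j \<and> beta_seq a d b0 j < c}"
      then obtain k where x: "x = beta_seq a d b0 k" and P: "s k > d / L" using mem_iff by blast
      have "real k * d / L < 1 / b0" using P unfolding s_def using L assms(3) by (simp add: field_simps)
      then have "real k < L / (b0 * d)" using L assms(3,4) by (simp add: field_simps)
      then have "k \<le> nat \<lceil>L / (b0 * d)\<rceil>" by linarith
      then show "x \<in> beta_seq a d b0 ` {..nat \<lceil>L / (b0 * d)\<rceil>}" using x by auto
    qed
    then show ?thesis unfolding Gdef by (meson finite_Un finite_imageI finite_atMost finite_subset finite.intros)
  qed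
  have pos: "\<forall>b\<in>G. 0 < b"
    unfolding Gdef using c by auto
  have cG: "c \<in> G" unfolding Gdef by simp
  have s0: "s 0 > d / L" unfolding s_def using c assms(3,4) L unfolding c_def
    by (simp add: field_simps)
  have b0G: "b0 \<in> G"
  proof -
    have "beta_seq a d b0 0 = b0" unfolding bs s_def by simp
    moreover have "\<forall>j\<le>0. 0 < beta_seq a d b0 j \<and> beta_seq a d b0 j < c" using mem_iff s0 by simp
    ultimately show ?thesis unfolding Gdef by (intro grid_memI[where k=0]) auto
  qed
  define M where "M = Max (g ` G)"
  have Mx: "g b \<le> M" if "b \<in> G" for b
    unfolding M_def using fin that by simp
  have part1: "M \<le> (SUP b\<in>{0<..}. g b)"
  proof -
    have "M \<in> g ` G" unfolding M_def using fin cG by (intro Max_in) auto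
    then obtain b where "b \<in> G" "M = g b" by auto
    then show ?thesis using pos by (auto intro: SUP_upper)
  qed
  have mono: "f y \<le> f x" if "0 \<le> x" "x \<le> y" for x y using assms(6) that by blast
  have key: "g b \<le> M + max (f 0 - f b0) (ereal d)" if b: "0 < b" for b
  proof -
    consider "b \<le> b0" | "c \<le> b" | "b0 < b" "b < c" by linarith
    then show ?thesis
    proof cases
      case 1
      have "L / b0 \<le> L / b" using 1 b L by (intro divide_left_mono) auto
      then have "ln a / b \<le> ln a / b0" unfolding lna by simp
      have "g b \<le> f 0 + ereal (ln a / b0)"
        unfolding g_def using mono[of 0 b] b \<open>ln a / b \<le> ln a / b0\<close> by (intro add_mono) auto
      also have "\<dots> \<le> g b0 + (f 0 - f b0)"
        unfolding g_def by (cases "f 0"; cases "f b0") auto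
      also have "\<dots> \<le> M + max (f 0 - f b0) (ereal d)"
        using Mx[OF b0G] by (intro add_mono) auto
      finally show ?thesis .
    next
      case 2
      have lc: "ln a / c = - d" unfolding c_def lna using L assms(3) by simp
      have "ln a / b \<le> ln a / c + d" unfolding lc using lna L b by (simp add: divide_nonpos_pos)
      have "g b \<le> f c + ereal (ln a / c + d)"
        unfolding g_def using mono[of c b] c 2 \<open>ln a / b \<le> ln a / c + d\<close> by (intro add_mono) auto
      also have "\<dots> = g c + ereal d" unfolding g_def by (simp add: add.assoc)
      also have "\<dots> \<le> M + max (f 0 - f b0) (ereal d)"
        using Mx[OF cG] by (intro add_mono) auto
      finally show ?thesis .
    next
      case 3
      define u where "u = 1 / b"
      have u1: "u < 1 / b0" unfolding u_def using 3 assms(4) by (simp add: frac_less2)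
      have u2: "d / L < u" unfolding u_def using 3 b L assms(3) unfolding c_def by (simp add: field_simps)
      define k where "k = nat \<lfloor>(1 / b0 - u) * L / d\<rfloor>"
      have nn: "0 \<le> (1 / b0 - u) * L / d" using u1 L assms(3) by simp
      have k1: "real k \<le> (1 / b0 - u) * L / d" unfolding k_def using nn by linarith
      have k2: "(1 / b0 - u) * L / d < real k + 1" unfolding k_def using nn by linarith
      have sk1: "u \<le> s k" using k1 L assms(3) unfolding s_def by (simp add: field_simps)
      have sk2: "s k - d / L < u"
      proof -
        have "(1/b0 - u)*L < (real k + 1)*d" using k2 assms(3) by (simp add: pos_divide_less_eq)
        then have neg: "((1/b0 - u)*L - (real k+1)*d)/L < 0" using L by (simp add: divide_neg_pos)
        have "s k - d/L = ((1/b0 - u)*L - (real k+1)*d)/L + u" unfolding s_def using L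
          by (simp add: field_simps)
        then show ?thesis using neg by linarith
      qed
      have sj: "s j \<ge> s k" if "j \<le> k" for j
        unfolding s_def using that L assms(3) by (simp add: field_simps mult_right_mono)
      have "\<forall>j\<le>k. 0 < beta_seq a d b0 j \<and> beta_seq a d b0 j < c"
        using mem_iff sj sk1 u2 by (meson less_le_trans)
      then have kG: "beta_seq a d b0 k \<in> G" unfolding Gdef by (intro grid_memI[where k=k]) auto
      have skp: "0 < s k" using sk1 u2 L assms(3) by (smt (verit) divide_pos_pos)
      have bk: "beta_seq a d b0 k \<le> b" unfolding bs using sk1 skp b unfolding u_def
        by (simp add: field_simps)
      have bkp: "0 < beta_seq a d b0 k" unfolding bs using skp by simp
      have lnb: "ln a / b \<le> ln a / beta_seq a d b0 k + d"
      proof -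
        have "ln a / b = - L * u" unfolding u_def lna by simp
        moreover have "ln a / beta_seq a d b0 k = - L * s k" unfolding bs lna by simp
        moreover have "- L * u \<le> - L * s k + d"
        proof -
          have "L * (s k - d / L) \<le> L * u" using sk2 L by simp
          then show ?thesis using L by (simp add: algebra_simps)
        qed
        ultimately show ?thesis by simp
      qed
      have "g b \<le> f (beta_seq a d b0 k) + ereal (ln a / beta_seq a d b0 k + d)"
        unfolding g_def using mono[of "beta_seq a d b0 k" b] bk bkp lnb by (intro add_mono) auto
      also have "\<dots> = g (beta_seq a d b0 k) + ereal d" unfolding g_def by (simp add: add.assoc)
      also have "\<dots> \<le> M + max (f 0 - f b0) (ereal d)"
        using Mx[OF kG] by (intro add_mono) auto
      finally show ?thesis .
    qed
  qed
  have part2: "(SUP b\<in>{0<..}. g b) \<le> M + max (f 0 - f b0) (ereal d)"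
    using key by (auto intro: SUP_least)
  show ?thesis using part1 part2 unfolding M_def g_def G_def by simp
qed

end
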